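(* For $\lambda\ge1$ and $s\in\mathbb R$ let $$\widetilde L(s)=-\int_{-\infty}^{\infty}\Big[1-\cos\big(4\arctan e^{\lambda t}-4\arctan e^{t-s}\big)\Big]\,dt .$$ Let $\lambda_0>1$ be the value of $\lambda$ for which $\max_{t>0}\big(4\arctan e^{\lambda t}-4\arctan e^{t}\big)=\pi/2$ (numerically $\lambda_0\simeq3.68078$). If $1\le\lambda\le\lambda_0$, then $\widetilde L$ has a nondegenerate critical point at $s=0$.
   Context: This $\widetilde L$ is the reduced Melnikov potential for the Hamiltonian $\tfrac12(\eta_1^2+\eta_2^2)+(\cos\xi_1-1)+\lambda^2(\cos\xi_2-1)+\varepsilon(1-\cos(\xi_2-\xi_1))$ along the family of unperturbed homoclinic loops $\xi_1=4\arctan e^{t-s}$, $\xi_2=4\arctan e^{\lambda t}$. The maximum $\max_{t>0}(4\arctan e^{\lambda t}-4\arctan e^{t})$ is increasing in $\lambda$, from $0$ at $\lambda=1$ towards $\pi$ as $\lambda\to\infty$, so $\lambda_0$ is well defined. *)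

theory Defs
  imports "HOL-Analysis.Analysis"
begin

definition Ltilde :: "real \<Rightarrow> real \<Rightarrow> real" where
  "Ltilde lam s = - integral UNIV
     (\<lambda>t. 1 - cos (4 * arctan (exp (lam * t)) - 4 * arctan (exp (t - s))))"

definition phase_max :: "real \<Rightarrow> real" where
  "phase_max lam = (SUP t\<in>{0<..}. 4 * arctan (exp (lam * t)) - 4 * arctan (exp t))"

definition lambda0 :: real where
  "lambda0 = (THE lam. lam > 1 \<and> phase_max lam = pi / 2)"

definition nondeg_crit_point :: "(real \<Rightarrow> real) \<Rightarrow> real \<Rightarrow> bool" where
  "nondeg_crit_point f x \<longleftrightarrow>
     (\<exists>f' d. (\<forall>\<^sub>F y in nhds x. (f has_real_derivative f' y) (at y))
            \<and> f' x = 0 \<and> (f' has_real_derivative d) (at x) \<and> d \<noteq> 0)"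

end

theory Submission
  imports Defs
begin

definition Bf :: "real \<Rightarrow> real" where "Bf x = 4 * arctan (exp x)"
definition Pf :: "real \<Rightarrow> real" where "Pf x = exp x / (1 + (exp x)^2)"
definition Qf :: "real \<Rightarrow> real" where "Qf x = (1 - (exp x)^2) / (1 + (exp x)^2)"

lemma Bf_deriv: "(Bf has_real_derivative 4 * Pf x) (at x)"
  unfolding Bf_def Pf_def
  by (auto intro!: derivative_eq_intros simp: power2_eq_square exp_add[symmetric] field_simps)

lemma Pf_deriv: "(Pf has_real_derivative Pf x * Qf x) (at x)"
proof -
  have "1 + (exp x)^2 \<noteq> 0" by (metis add_pos_nonneg less_irrefl zero_le_power2 zero_less_one)
  then show ?thesis unfolding Pf_def Qf_def
    by (auto intro!: derivative_eq_intros simp: field_simps power2_eq_square)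
qed

lemma Qf_deriv: "(Qf has_real_derivative - 4 * (Pf x)^2) (at x)"
proof -
  have "1 + (exp x)^2 \<noteq> 0" by (metis add_pos_nonneg less_irrefl zero_le_power2 zero_less_one)
  then show ?thesis unfolding Pf_def Qf_def
    by (auto intro!: derivative_eq_intros simp: field_simps power2_eq_square)
qed

lemma Bf_chain[derivative_intros]:
  "(g has_real_derivative g') (at x within S) \<Longrightarrow> ((\<lambda>x. Bf (g x)) has_real_derivative 4 * Pf (g x) * g') (at x within S)"
  using DERIV_chain2[OF Bf_deriv] by blast
lemma Pf_chain[derivative_intros]:
  "(g has_real_derivative g') (at x within S) \<Longrightarrow> ((\<lambda>x. Pf (g x)) has_real_derivative Pf (g x) * Qf (g x) * g') (at x within S)"
  using DERIV_chain2[OF Pf_deriv] by blast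
lemma Qf_chain[derivative_intros]:
  "(g has_real_derivative g') (at x within S) \<Longrightarrow> ((\<lambda>x. Qf (g x)) has_real_derivative - 4 * (Pf (g x))^2 * g') (at x within S)"
  using DERIV_chain2[OF Qf_deriv] by blast

lemma Pf_alt: "Pf x = 1 / (exp (-x) + exp x)"
  unfolding Pf_def by (simp add: field_simps exp_minus power2_eq_square)

lemma Pf_pos: "0 < Pf x" unfolding Pf_def by (simp add: add_pos_nonneg)

lemma Pf_le: "Pf x \<le> 1/2"
proof -
  have "0 \<le> (exp x - 1)^2" by simp
  then have "2 * exp x \<le> 1 + (exp x)^2" by (simp add: power2_eq_square algebra_simps)
  then show ?thesis unfolding Pf_def by (simp add: field_simps add_pos_nonneg)
qed

lemma Qf_abs: "\<bar>Qf x\<bar> \<le> 1"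
  unfolding Qf_def by (simp add: abs_le_iff field_simps add_pos_nonneg divide_le_eq)

lemma Pf_even: "Pf (-x) = Pf x" unfolding Pf_alt by simp

lemma Pf_exp: "Pf x \<le> exp (- \<bar>x\<bar>)"
proof -
  have "exp \<bar>x\<bar> \<le> exp (-x) + exp x" by (cases "x \<ge> 0") auto
  then show ?thesis unfolding Pf_alt
    by (simp add: exp_minus divide_simps add_pos_pos mult.commute)
qed

lemma Pf_shift: assumes "\<bar>s\<bar> \<le> 1" shows "Pf (t - s) \<le> 3 * Pf t"
proof -
  have e: "exp 1 \<le> (3::real)" by (rule exp_le)
  have i: "exp (-1::real) = inverse (exp 1)" by (simp add: exp_minus)
  have e3: "1/3 \<le> exp (-1::real)" unfolding i using e
    by (metis exp_gt_zero inverse_eq_divide le_imp_inverse_le)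
  have a: "exp (s - t) \<ge> exp (-1) * exp (-t)" using assms by (simp add: exp_add[symmetric])
  have b: "exp (t - s) \<ge> exp (-1) * exp t" using assms by (simp add: exp_add[symmetric])
  have c: "exp (-1) * (exp (-t) + exp t) \<le> exp (-(t-s)) + exp (t-s)" using a b by (simp add: algebra_simps)
  have d: "(1/3) * (exp (-t) + exp t) \<le> exp (-1) * (exp (-t) + exp t)"
    by (rule mult_right_mono[OF e3]) (simp add: add_nonneg_nonneg)
  have X: "0 < exp (-t) + exp t" by (simp add: add_pos_pos)
  have "1 / (exp (-(t-s)) + exp (t-s)) \<le> 1 / ((1/3) * (exp (-t) + exp t))"
  proof (rule divide_left_mono)
    show "(1/3) * (exp (-t) + exp t) \<le> exp (-(t-s)) + exp (t-s)" using c d by linarith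
    show "0 < (exp (-(t-s)) + exp (t-s)) * ((1/3) * (exp (-t) + exp t))" using X
      by (intro mult_pos_pos add_pos_pos) auto
  qed simp
  also have "\<dots> = 3 * (1 / (exp (-t) + exp t))" by simp
  finally show ?thesis unfolding Pf_alt .
qed

lemma Bf_neg: "Bf (-x) = 2 * pi - Bf x"
proof -
  have "arctan (exp (-x)) = arctan (1 / exp x)" by (simp add: exp_minus inverse_eq_divide)
  also have "\<dots> = pi/2 - arctan (exp x)" using Transcendental.arctan_inverse[of "exp x"] by simp
  finally show ?thesis unfolding Bf_def by simp
qed

lemma Bf_pos: "0 < Bf x" unfolding Bf_def using arctan_less_iff[of 0 "exp x"] by simp
lemma Bf_less: "Bf x < 2 * pi" unfolding Bf_def using arctan_ubound[of "exp x"] by simp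
lemma Bf_0: "Bf 0 = pi" unfolding Bf_def by simp
lemma Bf_mono: "x \<le> y \<Longrightarrow> Bf x \<le> Bf y" unfolding Bf_def by (simp add: arctan_le_iff)
lemma Bf_strict: "x < y \<Longrightarrow> Bf x < Bf y" unfolding Bf_def by (simp add: arctan_less_iff)

lemma Pf_0: "Pf 0 = 1/2" unfolding Pf_def by simp

lemma Pf_integrable: "integrable lborel Pf"
proof -
  have "set_integrable lborel (einterval (-\<infinity>) \<infinity>) Pf"
  proof (rule interval_integral_FTC_nonneg(1)[where F = "\<lambda>x. arctan (exp x)" and A = 0 and B = "pi/2"])
    show "((\<lambda>x. arctan (exp x)) has_real_derivative Pf x) (at x)" for x
      unfolding Pf_def by (auto intro!: derivative_eq_intros simp: power2_eq_square exp_add[symmetric] field_simps)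
    show "isCont Pf x" for x
    proof -
      have "1 + (exp x)^2 \<noteq> 0" by (metis add_pos_nonneg less_irrefl zero_le_power2 zero_less_one)
      then show ?thesis unfolding Pf_def by (auto intro!: continuous_intros)
    qed
    show "AE x in lborel. - \<infinity> < ereal x \<longrightarrow> ereal x < \<infinity> \<longrightarrow> 0 \<le> Pf x"
      using Pf_pos by (simp add: less_imp_le)
    show "(((\<lambda>x. arctan (exp x)) \<circ> real_of_ereal) \<longlongrightarrow> 0) (at_right (- \<infinity>))"
      unfolding ereal_tendsto_simps1
      using tendsto_arctan[OF exp_at_bot] by simp
    show "(((\<lambda>x. arctan (exp x)) \<circ> real_of_ereal) \<longlongrightarrow> pi/2) (at_left \<infinity>)"
      unfolding ereal_tendsto_simps1
      by (rule filterlim_compose[OF tendsto_arctan_at_top exp_at_top])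
  qed simp
  moreover have "einterval (-\<infinity>) \<infinity> = UNIV" by (auto simp: einterval_def)
  ultimately show ?thesis by (simp add: set_integrable_def)
qed

lemma mvt_abs:
  fixes g g' :: "real \<Rightarrow> real"
  assumes d: "\<And>x. min u v \<le> x \<Longrightarrow> x \<le> max u v \<Longrightarrow> (g has_real_derivative g' x) (at x)"
    and b: "\<And>x. min u v \<le> x \<Longrightarrow> x \<le> max u v \<Longrightarrow> \<bar>g' x\<bar> \<le> K"
  shows "\<bar>g v - g u\<bar> \<le> K * \<bar>v - u\<bar>"
proof -
  have main: "\<bar>g y - g x\<bar> \<le> K * \<bar>y - x\<bar>" if xy: "x < y" "min u v = x" "max u v = y" for x y
  proof -
    obtain z where z: "x < z" "z < y" "g y - g x = (y - x) * g' z"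
      using MVT2[OF xy(1), of g g'] d xy by (metis less_imp_le)
    have "\<bar>g' z\<bar> \<le> K" using b z xy by auto
    then show ?thesis using z xy(1) by (simp add: abs_mult mult_right_mono mult.commute)
  qed
  show ?thesis
  proof (cases u v rule: linorder_cases)
    case less then show ?thesis using main[of u v] by simp
  next
    case equal
    have "0 \<le> \<bar>g' u\<bar>" by simp
    then show ?thesis using equal by simp
  next
    case greater then show ?thesis using main[of v u] by (simp add: abs_minus_commute)
  qed
qed

lemma dui:
  fixes f fd fdd :: "real \<Rightarrow> real \<Rightarrow> real" and w :: "real \<Rightarrow> real"
  assumes s: "a < s" "s < b"
  and d1: "\<And>u t. a < u \<Longrightarrow> u < b \<Longrightarrow> ((\<lambda>u. f u t) has_real_derivative fd u t) (at u)"
  and d2: "\<And>u t. a < u \<Longrightarrow> u < b \<Longrightarrow> ((\<lambda>u. fd u t) has_real_derivative fdd u t) (at u)"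
  and bnd: "\<And>u t. a < u \<Longrightarrow> u < b \<Longrightarrow> \<bar>fdd u t\<bar> \<le> w t"
  and w: "integrable lborel w"
  and i0: "\<And>u. a < u \<Longrightarrow> u < b \<Longrightarrow> integrable lborel (f u)"
  and i1: "\<And>u. a < u \<Longrightarrow> u < b \<Longrightarrow> integrable lborel (fd u)"
  shows "((\<lambda>u. integral\<^sup>L lborel (f u)) has_real_derivative integral\<^sup>L lborel (fd s)) (at s)"
proof -
  define F where "F u = integral\<^sup>L lborel (f u)" for u
  define W where "W = integral\<^sup>L lborel w"
  have tay: "\<bar>f (s + h) t - f s t - h * fd s t\<bar> \<le> w t * h^2"
    if h: "a < s + h" "s + h < b" for h t
  proof -
    have inab: "a < x \<and> x < b" if "min s (s+h) \<le> x" "x \<le> max s (s+h)" for x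
      using that h s by (auto simp: min_def max_def split: if_splits)
    have "\<bar>(f (s+h) t - (s+h) * fd s t) - (f s t - s * fd s t)\<bar> \<le> (w t * \<bar>h\<bar>) * \<bar>(s+h) - s\<bar>"
    proof (rule mvt_abs[where g' = "\<lambda>x. fd x t - fd s t"])
      fix x assume x: "min s (s+h) \<le> x" "x \<le> max s (s+h)"
      then have "a < x" "x < b" using inab by auto
      then show "((\<lambda>x. f x t - x * fd s t) has_real_derivative fd x t - fd s t) (at x)"
        using d1 by (auto intro!: derivative_eq_intros)
      have "\<bar>fd x t - fd s t\<bar> \<le> w t * \<bar>x - s\<bar>"
      proof (rule mvt_abs[where g' = "\<lambda>y. fdd y t"])
        fix y assume "min s x \<le> y" "y \<le> max s x"
        then have "a < y" "y < b" using inab x by (auto simp: min_def max_def split: if_splits)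
        then show "((\<lambda>y. fd y t) has_real_derivative fdd y t) (at y)" "\<bar>fdd y t\<bar> \<le> w t"
          using d2 bnd by auto
      qed
      moreover have "\<bar>x - s\<bar> \<le> \<bar>h\<bar>" using x by (auto simp: min_def max_def split: if_splits)
      moreover have "0 \<le> w t" using bnd[OF s] by (meson abs_ge_zero order.trans)
      ultimately show "\<bar>fd x t - fd s t\<bar> \<le> w t * \<bar>h\<bar>"
        by (meson mult_left_mono order.trans)
    qed
    then show ?thesis by (simp add: algebra_simps power2_eq_square abs_mult)
  qed
  define F1 where "F1 = integral\<^sup>L lborel (fd s)"
  have key: "\<bar>F (s + h) - F s - h * F1\<bar> \<le> W * h^2"
    if h: "a < s + h" "s + h < b" for h
  proof -
    have I: "integrable lborel (f (s+h))" "integrable lborel (f s)" "integrable lborel (fd s)"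
      using i0 i1 h s by auto
    have "F (s + h) - F s - h * F1 = integral\<^sup>L lborel (\<lambda>t. f (s + h) t - f s t - h * fd s t)"
    proof -
      have 1: "integral\<^sup>L lborel (\<lambda>t. f (s + h) t - f s t - h * fd s t) =
          integral\<^sup>L lborel (\<lambda>t. f (s + h) t - f s t) - integral\<^sup>L lborel (\<lambda>t. h * fd s t)"
        using I by (intro Bochner_Integration.integral_diff) auto
      have 2: "integral\<^sup>L lborel (\<lambda>t. f (s + h) t - f s t) = F (s+h) - F s"
        unfolding F_def using I by (intro Bochner_Integration.integral_diff) auto
      have 3: "integral\<^sup>L lborel (\<lambda>t. h * fd s t) = h * F1" unfolding F1_def by simp
      show ?thesis using 1 2 3 by (simp only:)
    qed
    also have "\<bar>\<dots>\<bar> \<le> integral\<^sup>L lborel (\<lambda>t. \<bar>f (s + h) t - f s t - h * fd s t\<bar>)"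
      by (rule integral_abs_bound)
    also have "\<dots> \<le> integral\<^sup>L lborel (\<lambda>t. w t * h^2)"
      using I w tay[OF h] by (intro integral_mono) (auto intro!: integrable_diff)
    also have "\<dots> = W * h^2" unfolding W_def by simp
    finally show ?thesis .
  qed
  define d where "d = min (s - a) (b - s)"
  have d: "d > 0" using s by (simp add: d_def)
  have ev: "eventually (\<lambda>h. norm ((F (s + h) - F s) / h - F1) \<le> \<bar>h\<bar> * W) (at 0)"
    unfolding eventually_at
  proof (intro exI[of _ d] conjI allI impI ballI d)
    fix h :: real assume "h \<in> UNIV" and h: "h \<noteq> 0 \<and> dist h 0 < d"
    then have hh: "a < s + h" "s + h < b" by (auto simp: d_def)
    have "(F (s + h) - F s) / h - F1 = (F (s + h) - F s - h * F1) / h" using h by (simp add: field_simps)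
    then have "norm ((F (s + h) - F s) / h - F1) = \<bar>F (s + h) - F s - h * F1\<bar> / \<bar>h\<bar>" by simp
    also have "\<dots> \<le> W * h^2 / \<bar>h\<bar>" using key[OF hh] by (simp add: divide_right_mono)
    also have "\<dots> = \<bar>h\<bar> * W" using h by (simp add: power2_eq_square field_simps)
    finally show "norm ((F (s + h) - F s) / h - F1) \<le> \<bar>h\<bar> * W" .
  qed
  have "((\<lambda>h. \<bar>h\<bar> * W) \<longlongrightarrow> 0) (at 0)"
    by (rule tendsto_eq_intros refl | simp)+
  from Lim_null_comparison[OF ev this] have "((\<lambda>h. (F (s + h) - F s) / h) \<longlongrightarrow> F1) (at 0)"
    by (simp add: LIM_zero_iff)
  then show ?thesis unfolding DERIV_def F_def F1_def .
qed

lemma den_nz[simp]: "1 + (exp (x::real))^2 \<noteq> 0"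
  by (metis add_pos_nonneg less_irrefl zero_le_power2 zero_less_one)

lemma cont_Bf[continuous_intros]: "continuous_on S g \<Longrightarrow> continuous_on S (\<lambda>x. Bf (g x))"
  unfolding Bf_def by (auto intro!: continuous_intros)
lemma cont_Pf[continuous_intros]: "continuous_on S g \<Longrightarrow> continuous_on S (\<lambda>x. Pf (g x))"
  unfolding Pf_def by (auto intro!: continuous_intros)
lemma cont_Qf[continuous_intros]: "continuous_on S g \<Longrightarrow> continuous_on S (\<lambda>x. Qf (g x))"
  unfolding Qf_def by (auto intro!: continuous_intros)

lemma sc_arctan: "sin (2 * arctan y) = 2 * y / (1 + y^2)" "cos (2 * arctan y) = (1 - y^2) / (1 + y^2)"
proof -
  have p: "0 < 1 + y^2" by (simp add: add_pos_nonneg)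
  have sq: "(sqrt (1 + y^2))^2 = 1 + y^2" using p by simp
  show "sin (2 * arctan y) = 2 * y / (1 + y^2)"
    unfolding sin_double sin_arctan cos_arctan using sq by (simp add: field_simps power2_eq_square)
  show "cos (2 * arctan y) = (1 - y^2) / (1 + y^2)"
    unfolding cos_double sin_arctan cos_arctan using sq p by (simp add: field_simps power_divide)
qed

lemma cos_Bf: "cos (Bf x) = 1 - 8 * (Pf x)^2"
proof -
  have "Bf x = 2 * (2 * arctan (exp x))" unfolding Bf_def by simp
  then have "cos (Bf x) = 1 - 2 * (sin (2 * arctan (exp x)))^2"
    using cos_double_sin[of "2 * arctan (exp x)"] by (simp only:)
  then show ?thesis unfolding sc_arctan Pf_def by (simp add: power_divide power_mult_distrib)
qed

lemma sin_Bf: "sin (Bf x) = 4 * Pf x * Qf x"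
proof -
  have "Bf x = 2 * (2 * arctan (exp x))" unfolding Bf_def by simp
  then have "sin (Bf x) = 2 * sin (2 * arctan (exp x)) * cos (2 * arctan (exp x))"
    using sin_double[of "2 * arctan (exp x)"] by (simp only:)
  then show ?thesis unfolding sc_arctan Pf_def Qf_def by (simp add: field_simps)
qed

lemma Pf_lower: "exp (- \<bar>x\<bar>) / 2 \<le> Pf x"
proof -
  have "exp (-x) + exp x \<le> 2 * exp \<bar>x\<bar>" by (cases "x \<ge> 0") auto
  then show ?thesis unfolding Pf_alt
    by (simp add: exp_minus divide_simps add_pos_pos mult.commute)
qed

lemma Pf_scale: assumes "1 \<le> lam" shows "Pf (lam * t) \<le> 2 * Pf t"
proof -
  have "\<bar>t\<bar> \<le> \<bar>lam * t\<bar>" using assms by (simp add: abs_mult mult_le_cancel_right1) 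
  then have "Pf (lam * t) \<le> exp (- \<bar>t\<bar>)" using Pf_exp[of "lam * t"] by (meson exp_le_cancel_iff neg_le_iff_le order.trans)
  then show ?thesis using Pf_lower[of t] by simp
qed

lemma integrable_dom:
  fixes g w :: "real \<Rightarrow> real"
  assumes "continuous_on UNIV g" "integrable lborel w" "\<And>t. \<bar>g t\<bar> \<le> w t"
  shows "integrable lborel g"
proof (rule Bochner_Integration.integrable_bound[OF assms(2)])
  show "g \<in> borel_measurable lborel" using borel_measurable_continuous_onI[OF assms(1)] by simp
  show "AE x in lborel. norm (g x) \<le> norm (w x)" using assms(3)
    by (intro AE_I2) (metis abs_ge_self order.trans real_norm_def)
qed

lemma Pf_int_shift: "integrable lborel (\<lambda>t. Pf (t - u))"
  using lborel_integrable_real_affine[OF Pf_integrable, of 1 "-u"] by simp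

lemma Pf_int_mult: "integrable lborel (\<lambda>t. K * Pf t)"
  using Pf_integrable by simp

definition "ff lam s t = -(1 - cos (Bf (lam*t) - Bf (t - s)))"
definition "ff1 lam s t = -(sin (Bf (lam*t) - Bf (t - s)) * (4 * Pf (t - s)))"
definition "ff2 lam s t = -(cos (Bf (lam*t) - Bf (t - s)) * (4 * Pf (t - s))^2
     - sin (Bf (lam*t) - Bf (t - s)) * (4 * Pf (t - s) * Qf (t - s)))"
definition "hh lam s t = -(sin (Bf (lam*(s+t)) - Bf t) * (4 * Pf t))"
definition "hh1 lam s t = -(cos (Bf (lam*(s+t)) - Bf t) * (4 * Pf (lam*(s+t)) * lam) * (4 * Pf t))"
definition "hh2 lam s t = -(-(sin (Bf (lam*(s+t)) - Bf t)) * (4 * Pf (lam*(s+t)) * lam)^2 * (4 * Pf t)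
     + cos (Bf (lam*(s+t)) - Bf t) * (4 * Pf (lam*(s+t)) * Qf (lam*(s+t)) * lam * lam) * (4 * Pf t))"

lemma ff_d: "((\<lambda>s. ff lam s t) has_real_derivative ff1 lam s t) (at s)"
  unfolding ff_def ff1_def by (auto intro!: derivative_eq_intros simp: algebra_simps)
lemma ff1_d: "((\<lambda>s. ff1 lam s t) has_real_derivative ff2 lam s t) (at s)"
  unfolding ff2_def ff1_def by (auto intro!: derivative_eq_intros simp: algebra_simps power2_eq_square)
lemma hh_d: "((\<lambda>s. hh lam s t) has_real_derivative hh1 lam s t) (at s)"
  unfolding hh_def hh1_def by (auto intro!: derivative_eq_intros simp: algebra_simps)
lemma hh1_d: "((\<lambda>s. hh1 lam s t) has_real_derivative hh2 lam s t) (at s)"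
  unfolding hh2_def hh1_def by (auto intro!: derivative_eq_intros simp: algebra_simps power2_eq_square)

lemma ab1: "\<bar>a\<bar> \<le> 1 \<Longrightarrow> 0 \<le> (x::real) \<Longrightarrow> \<bar>a * x\<bar> \<le> x"
  by (simp add: abs_mult mult_left_le_one_le)

lemma ab2: "\<bar>a\<bar> \<le> 1 \<Longrightarrow> \<bar>b\<bar> \<le> 1 \<Longrightarrow> \<bar>a * x - b * (y::real)\<bar> \<le> \<bar>x\<bar> + \<bar>y\<bar>"
proof -
  assume "\<bar>a\<bar> \<le> 1" "\<bar>b\<bar> \<le> 1"
  then have "\<bar>a * x\<bar> \<le> \<bar>x\<bar>" "\<bar>b * y\<bar> \<le> \<bar>y\<bar>" by (simp_all add: abs_mult mult_left_le_one_le)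
  then show ?thesis by linarith
qed

lemma ff1_bound: "\<bar>ff1 lam u t\<bar> \<le> 4 * Pf (t - u)"
  unfolding ff1_def abs_minus_cancel by (rule ab1[OF abs_sin_le_one]) (simp add: Pf_pos less_imp_le)

lemma ff2_bound: "\<bar>ff2 lam u t\<bar> \<le> 12 * Pf (t - u)"
proof -
  define p where "p = Pf (t - u)"
  define q where "q = Qf (t - u)"
  have p: "0 < p" "p \<le> 1/2" using Pf_pos Pf_le by (auto simp: p_def)
  have q: "\<bar>q\<bar> \<le> 1" using Qf_abs by (simp add: q_def)
  have "\<bar>ff2 lam u t\<bar> \<le> \<bar>(4 * p)^2\<bar> + \<bar>4 * p * q\<bar>"
    unfolding ff2_def p_def[symmetric] q_def[symmetric] abs_minus_cancel
    by (rule ab2[OF abs_cos_le_one abs_sin_le_one])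
  also have "\<bar>(4 * p)^2\<bar> \<le> 8 * p" using p by (simp add: power2_eq_square)
  also have "\<bar>4 * p * q\<bar> \<le> 4 * p" using p q by (simp add: abs_mult mult_left_le_one_le mult.commute)
  finally show ?thesis unfolding p_def by simp
qed

lemma cosdiff_bound:
  assumes a: "0 < a" "a \<le> 1/2" and b: "0 < b" "b \<le> 1/2" and pq: "\<bar>p\<bar> \<le> 1" "\<bar>q\<bar> \<le> 1"
  shows "1 - ((1 - 8*a^2) * (1 - 8*b^2) + (4*a*p) * (4*b*q)) \<le> 4*a + 12*(b::real)"
proof -
  have "\<bar>p * q\<bar> \<le> 1" using pq by (simp add: abs_mult mult_le_one)
  then have "- (p*q) \<le> 1" by linarith
  then have "a*b*(- (p*q)) \<le> a*b*1" by (rule mult_left_mono) (use a b in simp)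
  then have 1: "- (a*b*(p*q)) \<le> a*b" by simp
  have "a*a \<le> a*(1/2)" by (rule mult_left_mono) (use a in simp_all)
  then have 2: "a*a \<le> a/2" by simp
  have "b*b \<le> b*(1/2)" by (rule mult_left_mono) (use b in simp_all)
  then have 3: "b*b \<le> b/2" by simp
  have "a*b \<le> (1/2)*b" by (rule mult_right_mono) (use a b in simp_all)
  then have 4: "a*b \<le> b/2" by simp
  have 5: "0 \<le> a*a*(b*b)" by simp
  have "1 - ((1 - 8*a^2) * (1 - 8*b^2) + (4*a*p) * (4*b*q)) = 8*(a*a) + 8*(b*b) - 64*(a*a*(b*b)) - 16*(a*b*(p*q))"
    by (simp add: algebra_simps power2_eq_square)
  then show ?thesis using 1 2 3 4 5 by linarith
qed

lemma ff_bound: assumes "1 \<le> lam" shows "\<bar>ff lam u t\<bar> \<le> 8 * Pf t + 12 * Pf (t - u)"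
proof -
  have "cos (Bf (lam*t) - Bf (t - u)) \<le> 1" by simp
  then have "\<bar>ff lam u t\<bar> = 1 - cos (Bf (lam*t) - Bf (t - u))" unfolding ff_def by simp
  also have "\<dots> \<le> 4 * Pf (lam*t) + 12 * Pf (t - u)"
    unfolding cos_diff cos_Bf sin_Bf
    by (rule cosdiff_bound[OF Pf_pos Pf_le Pf_pos Pf_le Qf_abs Qf_abs])
  also have "\<dots> \<le> 8 * Pf t + 12 * Pf (t - u)" using Pf_scale[OF assms, of t] by simp
  finally show ?thesis .
qed

lemma hh_bound: "\<bar>hh lam s t\<bar> \<le> 4 * Pf t"
  unfolding hh_def abs_minus_cancel by (rule ab1[OF abs_sin_le_one]) (simp add: Pf_pos less_imp_le)

lemma hh1_bound: assumes "0 \<le> lam" shows "\<bar>hh1 lam s t\<bar> \<le> 8 * lam * Pf t"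
proof -
  define p where "p = Pf (lam*(s+t))"
  have p: "0 < p" "p \<le> 1/2" using Pf_pos Pf_le by (auto simp: p_def)
  have "\<bar>hh1 lam s t\<bar> \<le> (4 * p * lam) * (4 * Pf t)"
    unfolding hh1_def p_def[symmetric] abs_minus_cancel mult.assoc
    by (rule ab1[OF abs_cos_le_one]) (use p assms Pf_pos[of t] in simp)
  also have "\<dots> \<le> (2 * lam) * (4 * Pf t)" using p assms Pf_pos[of t]
    by (intro mult_right_mono) auto
  finally show ?thesis by simp
qed

lemma hh2_bound: assumes "0 \<le> lam" shows "\<bar>hh2 lam s t\<bar> \<le> 24 * lam^2 * Pf t"
proof -
  define p where "p = Pf (lam*(s+t))"
  define q where "q = Qf (lam*(s+t))"
  define P where "P = Pf t"
  have p: "0 < p" "p \<le> 1/2" using Pf_pos Pf_le by (auto simp: p_def)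
  have q: "\<bar>q\<bar> \<le> 1" using Qf_abs by (simp add: q_def)
  have P: "0 < P" using Pf_pos by (simp add: P_def)
  have "hh2 lam s t = - (cos (Bf (lam*(s+t)) - Bf t) * (4 * p * q * lam * lam * (4 * P))
       - sin (Bf (lam*(s+t)) - Bf t) * ((4 * p * lam)^2 * (4 * P)))"
    unfolding hh2_def p_def q_def P_def by (simp add: algebra_simps)
  then have "\<bar>hh2 lam s t\<bar> \<le> \<bar>4 * p * q * lam * lam * (4 * P)\<bar> + \<bar>(4 * p * lam)^2 * (4 * P)\<bar>"
    using ab2[OF abs_cos_le_one abs_sin_le_one] by (simp only: abs_minus_cancel)
  also have "\<bar>4 * p * q * lam * lam * (4 * P)\<bar> = 16 * (p * \<bar>q\<bar>) * (lam^2 * P)"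
    using p P assms by (simp add: abs_mult power2_eq_square)
  also have "\<dots> \<le> 16 * (1/2) * (lam^2 * P)"
  proof -
    have "p * \<bar>q\<bar> \<le> p * 1" using p q by (intro mult_left_mono) auto
    then have "p * \<bar>q\<bar> \<le> 1/2" using p by linarith
    then show ?thesis using P by (intro mult_right_mono mult_left_mono) auto
  qed
  also have "\<bar>(4 * p * lam)^2 * (4 * P)\<bar> = 64 * (p * p) * (lam^2 * P)"
    using p P assms by (simp add: abs_mult power2_eq_square)
  also have "\<dots> \<le> 64 * (1/4) * (lam^2 * P)"
  proof -
    have "p * p \<le> (1/2) * (1/2)" using p by (intro mult_mono) auto
    then show ?thesis using P by (intro mult_right_mono mult_left_mono) auto
  qed
  finally show ?thesis unfolding P_def by (simp add: algebra_simps)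
qed

lemma main_analysis:
  assumes lam: "1 \<le> lam" and cpos: "\<And>t. 0 \<le> cos (Bf (lam * t) - Bf t)"
  shows "nondeg_crit_point (Ltilde lam) 0"
proof -
  have lam0: "0 \<le> lam" using lam by simp
  have int_ff: "integrable lborel (ff lam u)" for u
  proof (rule integrable_dom[where w = "\<lambda>t. 8 * Pf t + 12 * Pf (t - u)"])
    show "continuous_on UNIV (ff lam u)" unfolding ff_def by (auto intro!: continuous_intros)
    show "integrable lborel (\<lambda>t. 8 * Pf t + 12 * Pf (t - u))"
      using Pf_integrable Pf_int_shift[of u] by simp
    show "\<bar>ff lam u t\<bar> \<le> 8 * Pf t + 12 * Pf (t - u)" for t using ff_bound[OF lam] .
  qed
  have int_ff1: "integrable lborel (ff1 lam u)" for u
  proof (rule integrable_dom[where w = "\<lambda>t. 4 * Pf (t - u)"])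
    show "continuous_on UNIV (ff1 lam u)" unfolding ff1_def by (auto intro!: continuous_intros)
    show "integrable lborel (\<lambda>t. 4 * Pf (t - u))"
      using Pf_int_shift[of u] by simp
    show "\<bar>ff1 lam u t\<bar> \<le> 4 * Pf (t - u)" for t using ff1_bound .
  qed
  have int_hh: "integrable lborel (hh lam u)" for u
  proof (rule integrable_dom[where w = "\<lambda>t. 4 * Pf t"])
    show "continuous_on UNIV (hh lam u)" unfolding hh_def by (auto intro!: continuous_intros)
    show "integrable lborel (\<lambda>t. 4 * Pf t)" using Pf_integrable by simp
    show "\<bar>hh lam u t\<bar> \<le> 4 * Pf t" for t using hh_bound .
  qed
  have int_hh1: "integrable lborel (hh1 lam u)" for u
  proof (rule integrable_dom[where w = "\<lambda>t. 8 * lam * Pf t"])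
    show "continuous_on UNIV (hh1 lam u)" unfolding hh1_def by (auto intro!: continuous_intros)
    show "integrable lborel (\<lambda>t. 8 * lam * Pf t)" using Pf_integrable by simp
    show "\<bar>hh1 lam u t\<bar> \<le> 8 * lam * Pf t" for t using hh1_bound[OF lam0] .
  qed
  have L_eq: "Ltilde lam = (\<lambda>u. integral\<^sup>L lborel (ff lam u))"
  proof
    fix u
    have e: "(\<lambda>t. - (1 - cos (4 * arctan (exp (lam * t)) - 4 * arctan (exp (t - u))))) = ff lam u"
      by (rule ext) (simp only: ff_def Bf_def)
    have "Ltilde lam u = integral UNIV (ff lam u)"
      unfolding Ltilde_def e[symmetric] by (rule integral_neg[symmetric])
    also have "\<dots> = integral\<^sup>L lborel (ff lam u)" by (rule integral_lborel[OF int_ff])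
    finally show "Ltilde lam u = integral\<^sup>L lborel (ff lam u)" .
  qed
  have trans: "integral\<^sup>L lborel (ff1 lam u) = integral\<^sup>L lborel (hh lam u)" for u
  proof -
    have "integral\<^sup>L lborel (ff1 lam u) = \<bar>1\<bar> *\<^sub>R integral\<^sup>L lborel (\<lambda>x. ff1 lam u (u + 1 * x))"
      by (rule lborel_integral_real_affine) simp
    also have "(\<lambda>x. ff1 lam u (u + 1 * x)) = hh lam u"
      unfolding ff1_def hh_def by auto
    finally show ?thesis by simp
  qed
  define F' where "F' y = integral\<^sup>L lborel (hh lam y)" for y
  have D1: "(Ltilde lam has_real_derivative F' y) (at y)" if y: "-1 < y" "y < 1" for y
  proof -
    have "((\<lambda>u. integral\<^sup>L lborel (ff lam u)) has_real_derivative integral\<^sup>L lborel (ff1 lam y)) (at y)"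
    proof (rule dui[where a = "-1" and b = 1 and fdd = "ff2 lam" and w = "\<lambda>t. 36 * Pf t"])
      show "-1 < y" "y < 1" by fact+
      show "((\<lambda>u. ff lam u t) has_real_derivative ff1 lam u t) (at u)" for u t by (rule ff_d)
      show "((\<lambda>u. ff1 lam u t) has_real_derivative ff2 lam u t) (at u)" for u t by (rule ff1_d)
      show "\<bar>ff2 lam u t\<bar> \<le> 36 * Pf t" if "-1 < u" "u < 1" for u t
      proof -
        have "Pf (t - u) \<le> 3 * Pf t" using Pf_shift[of u t] that by simp
        then show ?thesis using ff2_bound[of lam u t] by linarith
      qed
      show "integrable lborel (\<lambda>t. 36 * Pf t)" using Pf_integrable by simp
    qed (auto intro: int_ff int_ff1)
    then show ?thesis unfolding L_eq F'_def trans .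
  qed
  have D2: "(F' has_real_derivative integral\<^sup>L lborel (hh1 lam 0)) (at 0)"
    unfolding F'_def
  proof (rule dui[where a = "-1" and b = 1 and fdd = "hh2 lam" and w = "\<lambda>t. 24 * lam^2 * Pf t"])
    show "((\<lambda>u. hh lam u t) has_real_derivative hh1 lam u t) (at u)" for u t by (rule hh_d)
    show "((\<lambda>u. hh1 lam u t) has_real_derivative hh2 lam u t) (at u)" for u t by (rule hh1_d)
    show "\<bar>hh2 lam u t\<bar> \<le> 24 * lam^2 * Pf t" for u t by (rule hh2_bound[OF lam0])
    show "integrable lborel (\<lambda>t. 24 * lam^2 * Pf t)" using Pf_integrable by simp
  qed (auto intro: int_hh int_hh1)
  have F'0: "F' 0 = 0"
  proof -
    have odd: "hh lam 0 (0 + -1 * x) = - hh lam 0 x" for x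
    proof -
      have e1: "hh lam 0 (0 + -1*x) = -(sin (Bf (lam * (-x)) - Bf (-x)) * (4 * Pf (-x)))"
        by (simp add: hh_def)
      have e2: "Bf (lam * (-x)) - Bf (-x) = -(Bf (lam*x) - Bf x)"
        using Bf_neg[of "lam*x"] Bf_neg[of x] by simp
      have e3: "hh lam 0 x = -(sin (Bf (lam*x) - Bf x) * (4 * Pf x))" by (simp add: hh_def)
      show ?thesis unfolding e1 e2 e3 Pf_even sin_minus by simp
    qed
    have "F' 0 = \<bar>-1\<bar> *\<^sub>R integral\<^sup>L lborel (\<lambda>x. hh lam 0 (0 + -1 * x))"
      unfolding F'_def by (rule lborel_integral_real_affine) simp
    also have "\<dots> = - F' 0" unfolding odd F'_def by simp
    finally show ?thesis by simp
  qed
  have neg: "integral\<^sup>L lborel (hh1 lam 0) < 0"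
  proof -
    define h where "h = hh1 lam 0"
    have hle: "h t \<le> 0" for t
    proof -
      have "0 \<le> cos (Bf (lam * (0 + t)) - Bf t) * (4 * Pf (lam * (0 + t)) * lam) * (4 * Pf t)"
        using cpos[of t] Pf_pos[of "lam * t"] Pf_pos[of t] lam0 by simp
      then show ?thesis unfolding h_def hh1_def by simp
    qed
    have h0: "h 0 = - 4 * lam" unfolding h_def hh1_def by (simp add: Pf_0 Bf_0)
    have "continuous_on UNIV h" unfolding h_def hh1_def by (auto intro!: continuous_intros)
    then have "isCont h 0" by (simp add: continuous_on_eq_continuous_at)
    then have "(h \<longlongrightarrow> h 0) (at 0)" by (simp add: isCont_def)
    moreover have "h 0 < - 2 * lam" using h0 lam by simp
    ultimately have "eventually (\<lambda>t. h t < - 2 * lam) (at 0)" by (rule order_tendstoD(2))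
    then obtain d where d: "d > 0" "\<And>t. t \<noteq> 0 \<Longrightarrow> dist t 0 < d \<Longrightarrow> h t < - 2 * lam"
      unfolding eventually_at by auto
    define e where "e = d / 2"
    have e: "0 < e" using d by (simp add: e_def)
    have hb: "h t \<le> indicator {-e..e} t * (- 2 * lam)" for t
    proof (cases "t \<in> {-e..e}")
      case True
      then have "\<bar>t\<bar> < d" using d by (auto simp: e_def)
      then have "h t \<le> - 2 * lam"
        using d(2)[of t] h0 lam by (cases "t = 0") auto
      then show ?thesis using True by simp
    next
      case False then show ?thesis using hle[of t] by simp
    qed
    have "integral\<^sup>L lborel h \<le> integral\<^sup>L lborel (\<lambda>t. indicator {-e..e} t * (- 2 * lam))"
    proof (rule integral_mono)
      show "integrable lborel h" unfolding h_def by (rule int_hh1)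
      show "integrable lborel (\<lambda>t. indicator {-e..e} t * (- 2 * lam))"
        by (intro integrable_mult_left integrable_real_indicator) (use e in auto)
    qed (use hb in auto)
    also have "\<dots> = (2 * e) * (- 2 * lam)" using e by simp
    also have "\<dots> < 0" using e lam by (simp add: mult_pos_neg)
    finally show ?thesis unfolding h_def .
  qed
  show ?thesis unfolding nondeg_crit_point_def
  proof (intro exI conjI)
    show "\<forall>\<^sub>F y in nhds 0. (Ltilde lam has_real_derivative F' y) (at y)"
      unfolding eventually_nhds
      by (intro exI[of _ "{-1<..<1}"]) (auto intro: D1)
    show "F' 0 = 0" by fact
    show "(F' has_real_derivative integral\<^sup>L lborel (hh1 lam 0)) (at 0)" by fact
    show "integral\<^sup>L lborel (hh1 lam 0) \<noteq> 0" using neg by simp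
  qed
qed

lemma pm_eq: "phase_max lam = (SUP t\<in>{0<..}. Bf (lam*t) - Bf t)"
  unfolding phase_max_def Bf_def ..

lemma D_le: "Bf (lam*t) - Bf t \<le> 2 * pi"
  using Bf_less[of "lam*t"] Bf_pos[of t] by simp

lemma bdd: "bdd_above ((\<lambda>t. Bf (lam*t) - Bf t) ` S)"
  by (rule bdd_aboveI2[where M = "2*pi"]) (rule D_le)

lemma D_le_pm: "0 < t \<Longrightarrow> Bf (lam*t) - Bf t \<le> phase_max lam"
  unfolding pm_eq by (rule cSUP_upper[OF _ bdd]) simp

lemma pm_le: "(\<And>t. 0 < t \<Longrightarrow> Bf (lam*t) - Bf t \<le> M) \<Longrightarrow> phase_max lam \<le> M"
  unfolding pm_eq by (rule cSUP_least) auto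

lemma pm_mono: "lam \<le> mu \<Longrightarrow> phase_max lam \<le> phase_max mu"
proof (rule pm_le)
  fix t :: real assume "lam \<le> mu" "0 < t"
  then have "Bf (lam*t) \<le> Bf (mu*t)" by (intro Bf_mono mult_right_mono) auto
  then show "Bf (lam*t) - Bf t \<le> phase_max mu" using D_le_pm[OF \<open>0 < t\<close>, of mu] by simp
qed

lemma pm_1: "phase_max 1 = 0"
proof (rule antisym)
  show "phase_max 1 \<le> 0" by (rule pm_le) simp
  show "0 \<le> phase_max 1" using D_le_pm[of 1 1] by simp
qed

lemma texp: fixes t :: real shows "0 < t \<Longrightarrow> t * exp (- t) \<le> 1"
proof -
  assume "0 < t"
  have "t \<le> exp t" using exp_ge_add_one_self[of t] by linarith
  then show ?thesis by (simp add: exp_minus field_simps)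
qed

lemma Bf_lip_lam:
  assumes "1 \<le> lam" "1 \<le> mu" "0 < t"
  shows "\<bar>Bf (mu*t) - Bf (lam*t)\<bar> \<le> 4 * \<bar>mu - lam\<bar>"
proof (rule mvt_abs[where g = "\<lambda>x. Bf (x*t)" and g' = "\<lambda>x. 4 * Pf (x*t) * t"])
  fix x assume x: "min lam mu \<le> x" "x \<le> max lam mu"
  show "((\<lambda>x. Bf (x*t)) has_real_derivative 4 * Pf (x*t) * t) (at x)"
    by (auto intro!: derivative_eq_intros)
  have x1: "1 \<le> x" using x assms by (auto simp: min_def split: if_splits)
  have "t \<le> x * t" using x1 assms by simp
  then have "exp (- (x*t)) \<le> exp (- t)" by simp
  moreover have "Pf (x*t) \<le> exp (- (x*t))" using Pf_exp[of "x*t"] assms x1 by simp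
  ultimately have "Pf (x*t) \<le> exp (- t)" by linarith
  then have "Pf (x*t) * t \<le> exp (- t) * t" using assms by (intro mult_right_mono) auto
  also have "\<dots> \<le> 1" using texp[OF assms(3)] by (simp add: mult.commute)
  finally show "\<bar>4 * Pf (x*t) * t\<bar> \<le> 4" using Pf_pos[of "x*t"] assms by (simp add: abs_mult)
qed

lemma pm_lip:
  assumes "1 \<le> lam" "1 \<le> mu"
  shows "phase_max lam \<le> phase_max mu + 4 * \<bar>mu - lam\<bar>"
proof (rule pm_le)
  fix t :: real assume t: "0 < t"
  have "Bf (lam*t) - Bf (mu*t) \<le> 4 * \<bar>mu - lam\<bar>" using Bf_lip_lam[OF assms t] by simp
  then show "Bf (lam*t) - Bf t \<le> phase_max mu + 4 * \<bar>mu - lam\<bar>" using D_le_pm[OF t, of mu] by simp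
qed

lemma pm_cont: "continuous_on {1..b} phase_max"
  unfolding continuous_on_iff
proof (intro ballI allI impI)
  fix x e :: real assume x: "x \<in> {1..b}" and e: "0 < e"
  show "\<exists>d>0. \<forall>x'\<in>{1..b}. dist x' x < d \<longrightarrow> dist (phase_max x') (phase_max x) < e"
  proof (intro exI[of _ "e/4"] conjI ballI impI)
    show "0 < e/4" using e by simp
    fix y assume y: "y \<in> {1..b}" "dist y x < e/4"
    have "phase_max y \<le> phase_max x + 4 * \<bar>x - y\<bar>" "phase_max x \<le> phase_max y + 4 * \<bar>y - x\<bar>"
      using pm_lip x y by auto
    then show "dist (phase_max y) (phase_max x) < e" using y(2) by (simp add: dist_real_def abs_minus_commute)
  qed
qed

lemma arctan_lip: "\<bar>arctan a - arctan b\<bar> \<le> \<bar>a - b\<bar>"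
proof -
  have "\<bar>arctan a - arctan b\<bar> \<le> 1 * \<bar>a - b\<bar>"
  proof (rule mvt_abs[where g' = "\<lambda>x. inverse (1 + x^2)"])
    fix x :: real
    show "(arctan has_real_derivative inverse (1 + x^2)) (at x)" by (rule DERIV_arctan)
    have "1 \<le> 1 + x^2" by simp
    then show "\<bar>inverse (1 + x^2)\<bar> \<le> 1" by (simp add: add_pos_nonneg inverse_le_1_iff)
  qed
  then show ?thesis by simp
qed

lemma exp_small: fixes x :: real assumes "0 \<le> x" "x < 1" shows "exp x \<le> 1 / (1 - x)"
proof -
  have "1 - x \<le> exp (- x)" using exp_ge_add_one_self[of "-x"] by simp
  then have "(1 - x) * exp x \<le> 1" by (simp add: exp_minus field_simps)
  then show ?thesis using assms by (simp add: field_simps)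
qed

lemma Bf_neg_small: "Bf (- t) \<le> 4 * exp (- t)"
  unfolding Bf_def using arctan_le_self[of "exp (-t)"] by simp

lemma pm_100: "pi / 2 \<le> phase_max 100"
proof -
  have a: "Bf (-10) \<le> 4 / 11"
  proof -
    have "11 \<le> exp (10::real)" using exp_ge_add_one_self[of 10] by simp
    then have "exp (-10::real) \<le> 1 / 11" by (simp add: exp_minus field_simps)
    then show ?thesis using Bf_neg_small[of 10] by simp
  qed
  have b: "Bf (1/10) \<le> pi + 4/9"
  proof -
    have "\<bar>arctan (exp (1/10)) - arctan 1\<bar> \<le> \<bar>exp (1/10) - 1\<bar>" by (rule arctan_lip)
    moreover have "exp (1/10::real) \<le> 10/9" using exp_small[of "1/10"] by simp
    moreover have "1 \<le> exp (1/10::real)" by simp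
    ultimately have "arctan (exp (1/10)) \<le> pi/4 + 1/9" by (simp add: arctan_one)
    then show ?thesis unfolding Bf_def by simp
  qed
  have "Bf (100 * (1/10)) - Bf (1/10) \<le> phase_max 100" by (rule D_le_pm) simp
  moreover have "Bf (100 * (1/10)) = 2 * pi - Bf (-10)" using Bf_neg[of 10] by simp
  ultimately show ?thesis using a b pi_gt3 by simp
qed

lemma attain:
  assumes lam: "1 \<le> lam" and pm: "phase_max lam = pi/2"
  shows "\<exists>t>0. pi/2 \<le> Bf (lam*t) - Bf t"
proof -
  define D where "D t = Bf (lam*t) - Bf t" for t
  have ne: "{1/(4*lam)..3} \<noteq> {}" using lam by (simp add: field_simps)
  have "continuous_on {1/(4*lam)..3} D" unfolding D_def by (auto intro!: continuous_intros)
  then obtain ts where ts: "ts \<in> {1/(4*lam)..3}" "\<And>y. y \<in> {1/(4*lam)..3} \<Longrightarrow> D y \<le> D ts"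
    using continuous_attains_sup[OF compact_Icc ne] by blast
  have ts0: "0 < ts" using ts(1) lam by (auto intro: less_le_trans[of 0 "1/(4*lam)"])
  have bound: "D t \<le> max (D ts) (4/3)" if t: "0 < t" for t
  proof (cases "t < 1/(4*lam)")
    case True
    have "lam * t \<le> 1/4" using True lam by (simp add: field_simps)
    then have "exp (lam * t) \<le> exp (1/4)" by simp
    also have "exp (1/4::real) \<le> 4/3" using exp_small[of "1/4"] by simp
    finally have e: "exp (lam * t) \<le> 4/3" .
    have "D t = 4 * (arctan (exp (lam*t)) - arctan (exp t))" unfolding D_def Bf_def by simp
    also have "\<dots> \<le> 4 * \<bar>exp (lam*t) - exp t\<bar>" using order.trans[OF abs_ge_self arctan_lip[of "exp (lam*t)" "exp t"]] by (intro mult_left_mono) auto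
    also have "\<dots> \<le> 4 * (1/3)"
    proof -
      have a1: "1 \<le> exp t" using t by simp
      have a2: "exp t \<le> exp (lam * t)" using t lam by simp
      then have "\<bar>exp (lam*t) - exp t\<bar> = exp (lam*t) - exp t" by simp
      then have "\<bar>exp (lam*t) - exp t\<bar> \<le> 1/3" using a1 e by linarith
      then show ?thesis by simp
    qed
    finally show ?thesis by simp
  next
    case False
    show ?thesis
    proof (cases "t \<le> 3")
      case True
      then show ?thesis using ts(2)[of t] False by simp
    next
      case F3: False
      have "1 + t \<le> exp t" by (rule exp_ge_add_one_self)
      then have "4 \<le> exp t" using F3 by linarith
      then have "exp (-t) \<le> 1/4" by (simp add: exp_minus field_simps)
      then have "Bf (-t) \<le> 1" using Bf_neg_small[of t] by simp
      then have "D t \<le> 1" unfolding D_def using Bf_neg[of t] Bf_less[of "lam*t"] by simp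
      then show ?thesis by simp
    qed
  qed
  have "phase_max lam \<le> max (D ts) (4/3)" by (rule pm_le) (use bound in \<open>simp add: D_def\<close>)
  then have "pi/2 \<le> D ts" using pm pi_gt3 by (simp add: max_def split: if_splits)
  then show ?thesis using ts0 unfolding D_def by blast
qed

lemma lambda0_prop: "1 < lambda0 \<and> phase_max lambda0 = pi / 2"
  unfolding lambda0_def
proof (rule theI')
  show "\<exists>!lam. 1 < lam \<and> phase_max lam = pi / 2"
  proof (rule ex_ex1I)
    obtain x where x: "1 \<le> x" "x \<le> 100" "phase_max x = pi/2"
      using IVT'[of phase_max 1 "pi/2" 100] pm_1 pm_100 pm_cont[of 100] by auto
    have "x \<noteq> 1" using x pm_1 by auto
    then show "\<exists>lam. 1 < lam \<and> phase_max lam = pi / 2" using x by (intro exI[of _ x]) auto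
  next
    have less: False if hyp: "1 < l1" "l1 < l2" "phase_max l1 = pi/2" "phase_max l2 = pi/2" for l1 l2
    proof -
      have l1: "1 \<le> l1" using hyp by simp
      obtain t where t: "0 < t" "pi/2 \<le> Bf (l1*t) - Bf t" using attain[OF l1 hyp(3)] by blast
      have "Bf (l1*t) < Bf (l2*t)" using t hyp by (intro Bf_strict) simp
      then have "pi/2 < Bf (l2*t) - Bf t" using t by simp
      also have "\<dots> \<le> phase_max l2" by (rule D_le_pm[OF t(1)])
      finally show False using hyp by simp
    qed
    fix l1 l2 assume "1 < l1 \<and> phase_max l1 = pi / 2" "1 < l2 \<and> phase_max l2 = pi / 2"
    then show "l1 = l2" using less[of l1 l2] less[of l2 l1] by (cases l1 l2 rule: linorder_cases) auto
  qed
qed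

lemma cos_nonneg:
  assumes "1 \<le> lam" "lam \<le> lambda0"
  shows "0 \<le> cos (Bf (lam * t) - Bf t)"
proof -
  have pm: "phase_max lam \<le> pi/2" using pm_mono[OF assms(2)] lambda0_prop by simp
  have pos: "0 \<le> Bf (lam*t) - Bf t \<and> Bf (lam*t) - Bf t \<le> pi/2" if "0 \<le> t" for t
  proof (cases "t = 0")
    case True then show ?thesis by simp
  next
    case False
    then have t: "0 < t" using that by simp
    have "t \<le> lam * t" using t assms by simp
    then have "Bf t \<le> Bf (lam*t)" by (rule Bf_mono)
    then show ?thesis using D_le_pm[OF t, of lam] pm by simp
  qed
  have "\<bar>Bf (lam * t) - Bf t\<bar> \<le> pi/2"
  proof (cases "0 \<le> t")
    case True then show ?thesis using pos[OF True] by simp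
  next
    case False
    then have "0 \<le> -t" by simp
    moreover have "Bf (lam * t) - Bf t = - (Bf (lam * (-t)) - Bf (-t))"
      using Bf_neg[of "lam * (-t)"] Bf_neg[of "-t"] by simp
    ultimately show ?thesis using pos[of "-t"] by simp
  qed
  then show ?thesis by (intro cos_ge_zero) linarith+
qed

theorem proposition10:
  fixes lam :: real
  assumes "1 \<le> lam" and "lam \<le> lambda0"
  shows "nondeg_crit_point (Ltilde lam) 0"
  by (rule main_analysis[OF assms(1) cos_nonneg[OF assms]])

end
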